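(* Let $\mathcal{X}$ be a Suslin space, $f_1,\dots,f_n\colon\mathcal{X}\to\mathbb{R}$ measurable, $c_1,\dots,c_n\in\mathbb{R}$, and $H:=\{\nu\in\mathcal{M}(\mathcal{X}):f_i\text{ is }\nu\text{-integrable and }\mathbb{E}_\nu[f_i]\le c_i,\ i=1,\dots,n\}$. Let $f\colon\mathcal{X}\to\mathbb{R}$ be semibounded and universally measurable. Then $F(\nu):=\mathbb{E}_{\widehat{\nu}}[f]$, $\nu\in H$, is measure affine on $H$.
   Context: $\widehat{\nu}$ is the completion of $\nu$; universally measurable means measurable w.r.t. the intersection of all completions of the Borel $\sigma$-algebra. $\Sigma(\operatorname{ext}H)$ is the smallest $\sigma$-algebra on the set of extreme points $\operatorname{ext}H$ making all evaluations $\nu\mapsto\nu(A)$, $A$ Borel, measurable. $F$ is measure affine on $H$ if, for every $\nu\in H$ and every probability measure $p$ on $\Sigma(\operatorname{ext}H)$ with $\nu(A)=\int_{\operatorname{ext}H}\nu'(A)\,dp(\nu')$ for all Borel $A$, $F$ is $p$-integrable and $F(\nu)=\int_{\operatorname{ext}H}F(\nu')\,dp(\nu')$. *)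

theory Defs
  imports "HOL-Probability.Probability"
begin

definition prob_measures :: "'a::topological_space measure set" where
  "prob_measures = {\<nu>. prob_space \<nu> \<and> sets \<nu> = sets borel}"

definition universally_measurable_sets :: "'a::topological_space set set" where
  "universally_measurable_sets = (\<Inter>\<mu>\<in>prob_measures. sets (completion \<mu>))"

definition universally_measurable :: "('a::topological_space \<Rightarrow> real) \<Rightarrow> bool" where
  "universally_measurable f \<longleftrightarrow>
     (\<forall>B\<in>sets (borel :: real measure). f -` B \<in> universally_measurable_sets)"

definition semibounded :: "('a \<Rightarrow> real) \<Rightarrow> bool" where
  "semibounded f \<longleftrightarrow> (\<exists>M. \<forall>x. f x \<le> M) \<or> (\<exists>M. \<forall>x. M \<le> f x)"

definition ereal_expect :: "'b measure \<Rightarrow> ('b \<Rightarrow> ereal) \<Rightarrow> ereal" where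
  "ereal_expect M g =
     enn2ereal (\<integral>\<^sup>+ x. e2ennreal (g x) \<partial>M) - enn2ereal (\<integral>\<^sup>+ x. e2ennreal (- g x) \<partial>M)"

definition quasi_integrable :: "'b measure \<Rightarrow> ('b \<Rightarrow> ereal) \<Rightarrow> bool" where
  "quasi_integrable M g \<longleftrightarrow> g \<in> borel_measurable M \<and>
     ((\<integral>\<^sup>+ x. e2ennreal (g x) \<partial>M) < \<infinity> \<or> (\<integral>\<^sup>+ x. e2ennreal (- g x) \<partial>M) < \<infinity>)"

definition ext_points :: "'a::topological_space measure set \<Rightarrow> 'a measure set" where
  "ext_points H = {\<nu>\<in>H. \<forall>\<nu>1\<in>H. \<forall>\<nu>2\<in>H. \<forall>t::real. 0 < t \<and> t < 1 \<and>
       (\<forall>A\<in>sets borel. measure \<nu> A = t * measure \<nu>1 A + (1 - t) * measure \<nu>2 A)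
       \<longrightarrow> \<nu>1 = \<nu> \<and> \<nu>2 = \<nu>}"

definition Sigma_ext :: "'a::topological_space measure set \<Rightarrow> 'a measure measure" where
  "Sigma_ext H = sigma (ext_points H)
     {{\<nu>\<in>ext_points H. measure \<nu> A \<in> B} | A B. A \<in> sets borel \<and> B \<in> sets (borel :: real measure)}"

definition measure_affine :: "'a::topological_space measure set \<Rightarrow> ('a measure \<Rightarrow> ereal) \<Rightarrow> bool" where
  "measure_affine H F \<longleftrightarrow>
     (\<forall>\<nu>\<in>H. \<forall>p. prob_space p \<and> sets p = sets (Sigma_ext H) \<and>
        (\<forall>A\<in>sets borel. measure \<nu> A = (\<integral>\<nu>'. measure \<nu>' A \<partial>p))
        \<longrightarrow> quasi_integrable (completion p) F \<and> F \<nu> = ereal_expect (completion p) F)"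

end

theory Submission imports Defs begin

lemma meas_compl_AE:
  assumes g: "g \<in> M \<rightarrow>\<^sub>M N" and ae: "AE x in M. f x = g x"
    and sp: "\<And>x. x \<in> space M \<Longrightarrow> f x \<in> space N"
  shows "f \<in> completion M \<rightarrow>\<^sub>M N"
proof (rule measurableI)
  show "x \<in> space (completion M) \<Longrightarrow> f x \<in> space N" for x using sp by simp
  fix B assume B: "B \<in> sets N"
  have A: "g -` B \<inter> space M \<in> sets (completion M)" using g B by (auto intro: measurable_sets)
  have "AE x in completion M. x \<in> g -` B \<inter> space M \<longleftrightarrow> x \<in> f -` B \<inter> space M"
    using AE_completion[OF ae] by (rule eventually_mono) auto
  then show "f -` B \<inter> space (completion M) \<in> sets (completion M)"
    using completion.in_sets_AE[OF _ A] by auto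
qed

lemma pw_shift:
  fixes y :: ereal and M :: real
  assumes "- ereal M \<le> y" "0 \<le> M"
  shows "e2ennreal (y + ereal M) + e2ennreal (- y) = e2ennreal y + ennreal M"
proof (cases y)
  case (real r)
  then have r: "-M \<le> r" using assms by simp
  show ?thesis
  proof (cases "0 \<le> r")
    case True
    then show ?thesis using real assms r by (simp add: ennreal_plus ennreal_neg)
  next
    case False
    then have "ennreal (r + M) + ennreal (-r) = ennreal M" using r
      by (subst ennreal_plus[symmetric]) auto
    then show ?thesis using real False by (simp add: ennreal_neg)
  qed
qed (use assms in auto)

lemma expect_shift:
  fixes g :: "'b \<Rightarrow> ereal" and M :: real
  assumes ps: "prob_space \<mu>" and gm: "g \<in> borel_measurable \<mu>"
    and lb: "\<And>x. x \<in> space \<mu> \<Longrightarrow> - ereal M \<le> g x" and M0: "0 \<le> M"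
  shows "ereal_expect \<mu> g = enn2ereal (\<integral>\<^sup>+x. e2ennreal (g x + ereal M) \<partial>\<mu>) - ereal M"
proof -
  interpret prob_space \<mu> by fact
  define I0 where "I0 = (\<integral>\<^sup>+x. e2ennreal (g x) \<partial>\<mu>)"
  define I1 where "I1 = (\<integral>\<^sup>+x. e2ennreal (g x + ereal M) \<partial>\<mu>)"
  define I2 where "I2 = (\<integral>\<^sup>+x. e2ennreal (- g x) \<partial>\<mu>)"
  have "I1 + I2 = (\<integral>\<^sup>+x. e2ennreal (g x + ereal M) + e2ennreal (- g x) \<partial>\<mu>)"
    unfolding I1_def I2_def using gm by (intro nn_integral_add[symmetric]) auto
  also have "\<dots> = (\<integral>\<^sup>+x. e2ennreal (g x) + ennreal M \<partial>\<mu>)"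
    using lb M0 by (intro nn_integral_cong pw_shift) auto
  also have "\<dots> = I0 + ennreal M"
    unfolding I0_def using gm by (subst nn_integral_add) (auto simp: emeasure_space_1)
  finally have eq: "I1 + I2 = I0 + ennreal M" .
  have "I2 \<le> (\<integral>\<^sup>+x. ennreal M \<partial>\<mu>)"
    unfolding I2_def
  proof (intro nn_integral_mono)
    fix x assume "x \<in> space \<mu>"
    then have "- g x \<le> ereal M" using lb[of x] by (simp add: ereal_uminus_le_reorder)
    then have "e2ennreal (- g x) \<le> e2ennreal (ereal M)" by (rule e2ennreal_mono)
    then show "e2ennreal (- g x) \<le> ennreal M" by simp
  qed
  also have "\<dots> = ennreal M" by (simp add: emeasure_space_1)
  finally have I2f: "I2 \<le> ennreal M" .
  then obtain c where c: "I2 = ennreal c" "0 \<le> c"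
    by (metis ennreal_cases ennreal_less_top le_less_trans top.not_eq_extremum)
  have "enn2ereal I1 + ereal c = enn2ereal I0 + ereal M"
    using arg_cong[OF eq, of enn2ereal] c M0 by (simp add: plus_ennreal.rep_eq)
  then have "enn2ereal I0 - ereal c = enn2ereal I1 - ereal M"
    by (cases "enn2ereal I0"; cases "enn2ereal I1") auto
  then show ?thesis unfolding ereal_expect_def I0_def[symmetric] I1_def[symmetric] I2_def[symmetric]
    using c by simp
qed


lemma pem: "prob_space a \<Longrightarrow> emeasure a A = ennreal (measure a A)"
proof -
  assume "prob_space a"
  then interpret prob_space a .
  show ?thesis by (rule emeasure_eq_measure)
qed

lemma pml: "prob_space a \<Longrightarrow> measure a A \<le> 1"
proof -
  assume "prob_space a"
  then interpret prob_space a .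
  show ?thesis by (simp add: prob_le_1)
qed

lemma core:
  fixes f :: "'a::topological_space \<Rightarrow> real" and M :: real
  assumes fum: "\<And>\<mu>. \<mu> \<in> prob_measures \<Longrightarrow> f \<in> borel_measurable (completion \<mu>)"
    and lb: "\<And>x. - M \<le> f x" and M0: "0 \<le> M"
    and Hs: "H \<subseteq> prob_measures" and \<nu>: "\<nu> \<in> prob_measures"
    and pp: "prob_space p" and ps: "sets p = sets (Sigma_ext H)"
    and rep: "\<forall>A\<in>sets borel. measure \<nu> A = (\<integral>\<nu>'. measure \<nu>' A \<partial>p)"
  shows "quasi_integrable (completion p) (\<lambda>\<nu>. ereal_expect (completion \<nu>) (\<lambda>x. ereal (f x))) \<and>
    ereal_expect (completion \<nu>) (\<lambda>x. ereal (f x)) = ereal_expect (completion p) (\<lambda>\<nu>. ereal_expect (completion \<nu>) (\<lambda>x. ereal (f x)))"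
proof -
  define F where "F = (\<lambda>\<nu>. ereal_expect (completion \<nu>) (\<lambda>x. ereal (f x)))"
  interpret p: prob_space p by fact
  have sp: "space p = ext_points H"
    using sets_eq_imp_space_eq[OF ps] by (simp add: Sigma_ext_def space_measure_of_conv)
  have elem: "\<nu>' \<in> prob_measures" if "\<nu>' \<in> space p" for \<nu>'
    using that sp Hs by (auto simp: ext_points_def)
  have meval: "(\<lambda>\<nu>'. measure \<nu>' A) \<in> borel_measurable p" if A: "A \<in> sets borel" for A
  proof -
    have "(\<lambda>\<nu>'. measure \<nu>' A) \<in> borel_measurable (Sigma_ext H)"
    proof (rule measurableI)
      fix B :: "real set" assume B: "B \<in> sets borel"
      have "(\<lambda>\<nu>'. measure \<nu>' A) -` B \<inter> space (Sigma_ext H) = {\<nu>\<in>ext_points H. measure \<nu> A \<in> B}"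
        by (auto simp: Sigma_ext_def space_measure_of_conv)
      also have "\<dots> \<in> sets (Sigma_ext H)"
        unfolding Sigma_ext_def using A B by (intro in_measure_of) auto
      finally show "(\<lambda>\<nu>'. measure \<nu>' A) -` B \<inter> space (Sigma_ext H) \<in> sets (Sigma_ext H)" .
    qed auto
    then show ?thesis unfolding measurable_cong_sets[OF ps refl] .
  qed
  have K: "(\<lambda>x. x) \<in> p \<rightarrow>\<^sub>M subprob_algebra borel"
  proof (rule measurable_subprob_algebra)
    fix a assume "a \<in> space p"
    then have "a \<in> prob_measures" by (rule elem)
    then show "subprob_space a" "sets a = sets borel"
      by (auto simp: prob_measures_def prob_space_imp_subprob_space)
  next
    fix A :: "'a set" assume A: "A \<in> sets borel"
    have "(\<lambda>a. ennreal (measure a A)) \<in> borel_measurable p" using meval[OF A] by simp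
    then show "(\<lambda>a. emeasure a A) \<in> borel_measurable p"
    proof (rule measurable_cong[THEN iffD1, rotated])
      fix a assume "a \<in> space p"
      then have "a \<in> prob_measures" by (rule elem)
      then show "ennreal (measure a A) = emeasure a A"
        by (auto simp: prob_measures_def pem)
    qed
  qed
  have ne: "space p \<noteq> {}" by (rule p.not_empty)
  have nub: "\<nu> = p \<bind> (\<lambda>x. x)"
  proof (rule measure_eqI)
    show "sets \<nu> = sets (p \<bind> (\<lambda>x. x))"
      using \<nu> ne elem by (subst sets_bind[where N=borel]) (auto simp: prob_measures_def)
  next
    fix A assume "A \<in> sets \<nu>"
    then have A: "A \<in> sets borel" using \<nu> by (simp add: prob_measures_def)
    have int: "integrable p (\<lambda>\<nu>'. measure \<nu>' A)"
      by (rule p.integrable_const_bound[where B=1]) (auto intro!: meval[OF A] AE_I2 pml dest!: elem simp: prob_measures_def)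
    have "emeasure \<nu> A = ennreal (measure \<nu> A)"
      using \<nu> by (auto simp: prob_measures_def pem)
    also have "\<dots> = ennreal (\<integral>\<nu>'. measure \<nu>' A \<partial>p)" using rep A by simp
    also have "\<dots> = (\<integral>\<^sup>+\<nu>'. ennreal (measure \<nu>' A) \<partial>p)"
      by (rule nn_integral_eq_integral[OF int, symmetric]) auto
    also have "\<dots> = (\<integral>\<^sup>+\<nu>'. emeasure \<nu>' A \<partial>p)"
      by (intro nn_integral_cong) (auto dest!: elem simp: prob_measures_def pem)
    also have "\<dots> = emeasure (p \<bind> (\<lambda>x. x)) A"
      by (rule emeasure_bind[OF ne K A, symmetric])
    finally show "emeasure \<nu> A = emeasure (p \<bind> (\<lambda>x. x)) A" .
  qed
  obtain h where hm: "h \<in> borel_measurable \<nu>" and fh: "AE x in \<nu>. f x = h x"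
    using completion_ex_borel_measurable_real[OF fum[OF \<nu>]] by blast
  obtain N where N: "{x\<in>space \<nu>. \<not> f x = h x} \<subseteq> N" "N \<in> null_sets \<nu>"
    using fh by (auto elim!: AE_E)
  have Nb: "N \<in> sets borel" using N(2) \<nu> by (auto simp: prob_measures_def)
  have hb: "h \<in> borel_measurable borel"
    using hm \<nu> measurable_cong_sets[of \<nu> borel] by (auto simp: prob_measures_def)
  have "0 = emeasure \<nu> N" using N(2) by auto
  also have "\<dots> = (\<integral>\<^sup>+\<nu>'. emeasure \<nu>' N \<partial>p)"
    by (subst nub, rule emeasure_bind[OF ne K Nb])
  finally have "AE \<nu>' in p. emeasure \<nu>' N = 0"
    by (subst nn_integral_0_iff_AE[symmetric])
       (auto intro: measurable_emeasure_subprob_algebra[THEN measurable_compose[OF K]] Nb)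
  note aeN = this
  define Q where "Q = (\<lambda>\<nu>'. \<integral>\<^sup>+x. ennreal (h x + M) \<partial>\<nu>')"
  define Qh where "Qh = (\<lambda>\<nu>'. \<integral>\<^sup>+x. ennreal (f x + M) \<partial>completion \<nu>')"
  have Qm: "Q \<in> borel_measurable p"
    unfolding Q_def using hb
    by (intro measurable_compose[OF K nn_integral_measurable_subprob_algebra]) auto
  have QQ: "Qh \<nu>' = Q \<nu>'" if "\<nu>' \<in> prob_measures" "emeasure \<nu>' N = 0" for \<nu>'
  proof -
    have "N \<in> null_sets \<nu>'" using that Nb by (auto simp: prob_measures_def null_sets_def)
    have s1: "space \<nu> = UNIV" "space \<nu>' = UNIV"
      using \<nu> that sets_eq_imp_space_eq[of \<nu> borel] sets_eq_imp_space_eq[of \<nu>' borel]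
      by (auto simp: prob_measures_def)
    from \<open>N \<in> null_sets \<nu>'\<close> have "AE x in \<nu>'. f x = h x"
      by (rule AE_I') (use N(1) s1 in auto)
    then have "AE x in completion \<nu>'. ennreal (f x + M) = ennreal (h x + M)"
      by (rule AE_completion[THEN eventually_mono]) auto
    then have "Qh \<nu>' = (\<integral>\<^sup>+x. ennreal (h x + M) \<partial>completion \<nu>')"
      unfolding Qh_def by (rule nn_integral_cong_AE)
    then show ?thesis unfolding Q_def by (simp add: nn_integral_completion)
  qed
  have aeQ: "AE \<nu>' in p. Qh \<nu>' = Q \<nu>'"
    using aeN AE_space[of p] by eventually_elim (auto intro!: QQ elem)
  have Fe: "F \<nu>' = enn2ereal (Qh \<nu>') - ereal M" if "\<nu>' \<in> prob_measures" for \<nu>'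
  proof -
    have "prob_space \<nu>'" using that by (simp add: prob_measures_def)
    then have pc: "prob_space (completion \<nu>')" by (rule prob_space.prob_space_completion)
    have "F \<nu>' = enn2ereal (\<integral>\<^sup>+x. e2ennreal (ereal (f x) + ereal M) \<partial>completion \<nu>') - ereal M"
      unfolding F_def using fum[OF that] lb M0
      by (intro expect_shift[OF pc]) auto
    then show ?thesis unfolding Qh_def by simp
  qed
  have Flb: "- ereal M \<le> F \<nu>'" if "\<nu>' \<in> prob_measures" for \<nu>'
    unfolding Fe[OF that] using enn2ereal_nonneg[of "Qh \<nu>'"] by (cases "enn2ereal (Qh \<nu>')") auto
  have pcp: "prob_space (completion p)" by (rule p.prob_space_completion)
  have Qhm: "Qh \<in> borel_measurable (completion p)"
    by (rule meas_compl_AE[OF Qm aeQ]) auto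
  have Fm: "F \<in> borel_measurable (completion p)"
  proof -
    have "(\<lambda>\<nu>'. enn2ereal (Qh \<nu>') - ereal M) \<in> borel_measurable (completion p)"
      using Qhm by measurable
    then show ?thesis
      by (rule measurable_cong[THEN iffD1, rotated]) (auto simp: Fe elem)
  qed
  have quasi: "quasi_integrable (completion p) F"
    unfolding quasi_integrable_def
  proof (intro conjI disjI2 Fm)
    interpret pc: prob_space "completion p" by (rule pcp)
    have "(\<integral>\<^sup>+x. e2ennreal (- F x) \<partial>completion p) \<le> (\<integral>\<^sup>+x. ennreal M \<partial>completion p)"
    proof (intro nn_integral_mono)
      fix x assume "x \<in> space (completion p)"
      then have "- F x \<le> ereal M" using Flb[of x] elem[of x] by (simp add: ereal_uminus_le_reorder)
      then have "e2ennreal (- F x) \<le> e2ennreal (ereal M)" by (rule e2ennreal_mono)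
      then show "e2ennreal (- F x) \<le> ennreal M" by simp
    qed
    also have "\<dots> < \<infinity>" by (simp add: p.emeasure_space_1)
    finally show "(\<integral>\<^sup>+x. e2ennreal (- F x) \<partial>completion p) < \<infinity>" .
  qed
  have "Qh \<nu> = (\<integral>\<^sup>+x. ennreal (h x + M) \<partial>\<nu>)"
  proof -
    have "AE x in completion \<nu>. ennreal (f x + M) = ennreal (h x + M)"
      using fh by (rule AE_completion[THEN eventually_mono]) auto
    then show ?thesis unfolding Qh_def by (subst nn_integral_cong_AE) (auto simp: nn_integral_completion)
  qed
  also have "\<dots> = (\<integral>\<^sup>+\<nu>'. Q \<nu>' \<partial>p)"
    unfolding Q_def using hb by (subst nub, intro nn_integral_bind[OF _ K]) auto
  also have "\<dots> = (\<integral>\<^sup>+\<nu>'. Qh \<nu>' \<partial>completion p)"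
    using aeQ by (subst nn_integral_completion[symmetric], intro nn_integral_cong_AE AE_completion)
      (auto elim: eventually_mono)
  finally have Qhnu: "Qh \<nu> = (\<integral>\<^sup>+\<nu>'. Qh \<nu>' \<partial>completion p)" .
  have "ereal_expect (completion p) F = enn2ereal (\<integral>\<^sup>+\<nu>'. e2ennreal (F \<nu>' + ereal M) \<partial>completion p) - ereal M"
    by (rule expect_shift[OF pcp Fm _ M0]) (use Flb elem in auto)
  also have "(\<integral>\<^sup>+\<nu>'. e2ennreal (F \<nu>' + ereal M) \<partial>completion p) = (\<integral>\<^sup>+\<nu>'. Qh \<nu>' \<partial>completion p)"
  proof (intro nn_integral_cong)
    fix x assume "x \<in> space (completion p)"
    then have "F x + ereal M = enn2ereal (Qh x)" using Fe[of x] elem[of x] enn2ereal_nonneg[of "Qh x"]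
      by (cases "enn2ereal (Qh x)") auto
    then show "e2ennreal (F x + ereal M) = Qh x" by simp
  qed
  finally have "ereal_expect (completion p) F = F \<nu>"
    using Fe[OF \<nu>] Qhnu by simp
  then show ?thesis using quasi unfolding F_def by simp
qed


lemma expect_neg:
  assumes "(\<integral>\<^sup>+x. e2ennreal (g x) \<partial>\<mu>) < \<infinity> \<or> (\<integral>\<^sup>+x. e2ennreal (- g x) \<partial>\<mu>) < \<infinity>"
  shows "ereal_expect \<mu> (\<lambda>x. - g x) = - ereal_expect \<mu> g"
proof -
  have "enn2ereal a - enn2ereal b = - (enn2ereal b - enn2ereal a)" if "a < \<infinity> \<or> b < \<infinity>" for a b
    using enn2ereal_nonneg[of a] enn2ereal_nonneg[of b] that
    by (cases "enn2ereal a"; cases "enn2ereal b") auto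
  from this[OF assms] show ?thesis unfolding ereal_expect_def by simp
qed

lemma quasi_neg: "quasi_integrable \<mu> G \<Longrightarrow> quasi_integrable \<mu> (\<lambda>x. - G x)"
  unfolding quasi_integrable_def by auto

lemma expect_cong: "(\<And>x. x \<in> space \<mu> \<Longrightarrow> G x = G' x) \<Longrightarrow> ereal_expect \<mu> G = ereal_expect \<mu> G'"
  unfolding ereal_expect_def by (simp cong: nn_integral_cong)

lemma quasi_cong: "(\<And>x. x \<in> space \<mu> \<Longrightarrow> G x = G' x) \<Longrightarrow> quasi_integrable \<mu> G \<longleftrightarrow> quasi_integrable \<mu> G'"
  unfolding quasi_integrable_def by (simp cong: nn_integral_cong measurable_cong)

theorem lemma9p9:
  fixes g :: "'p::polish_space \<Rightarrow> 'a::t2_space"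
    and n :: nat and fs :: "nat \<Rightarrow> 'a \<Rightarrow> real" and cs :: "nat \<Rightarrow> real"
    and H :: "'a measure set" and f :: "'a \<Rightarrow> real"
  assumes suslin: "continuous_on UNIV g" "surj g"
    and fs_meas: "\<And>i. i < n \<Longrightarrow> fs i \<in> borel_measurable borel"
    and H_def: "H = {\<nu>\<in>prob_measures. \<forall>i<n. integrable \<nu> (fs i) \<and> (\<integral>x. fs i x \<partial>\<nu>) \<le> cs i}"
    and f_sb: "semibounded f"
    and f_um: "universally_measurable f"
  shows "measure_affine H (\<lambda>\<nu>. ereal_expect (completion \<nu>) (\<lambda>x. ereal (f x)))"
  unfolding measure_affine_def
proof (intro ballI allI impI)
  fix \<nu> p
  assume \<nu>H: "\<nu> \<in> H" and pa: "prob_space p \<and> sets p = sets (Sigma_ext H) \<and>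
        (\<forall>A\<in>sets borel. measure \<nu> A = (\<integral>\<nu>'. measure \<nu>' A \<partial>p))"
  have Hs: "H \<subseteq> prob_measures" using H_def by auto
  have \<nu>: "\<nu> \<in> prob_measures" using \<nu>H Hs by auto
  have sp: "space p = ext_points H"
    using sets_eq_imp_space_eq[of p "Sigma_ext H"] pa by (simp add: Sigma_ext_def space_measure_of_conv)
  have elem: "\<nu>' \<in> prob_measures" if "\<nu>' \<in> space p" for \<nu>'
    using that sp Hs by (auto simp: ext_points_def)
  have fum: "f \<in> borel_measurable (completion \<mu>)" if "\<mu> \<in> prob_measures" for \<mu>
  proof (rule measurableI)
    fix B :: "real set" assume "B \<in> sets borel"
    then have "f -` B \<in> universally_measurable_sets" using f_um by (simp add: universally_measurable_def)
    then have "f -` B \<in> sets (completion \<mu>)" using that by (auto simp: universally_measurable_sets_def)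
    then show "f -` B \<inter> space (completion \<mu>) \<in> sets (completion \<mu>)"
      by (metis inf.absorb1 sets.sets_into_space)
  qed auto
  show "quasi_integrable (completion p) (\<lambda>\<nu>. ereal_expect (completion \<nu>) (\<lambda>x. ereal (f x))) \<and>
        ereal_expect (completion \<nu>) (\<lambda>x. ereal (f x)) =
        ereal_expect (completion p) (\<lambda>\<nu>. ereal_expect (completion \<nu>) (\<lambda>x. ereal (f x)))"
  proof (cases "\<exists>m. \<forall>x. m \<le> f x")
    case True
    then obtain m where m: "\<And>x. m \<le> f x" by blast
    have lbs: "- max 0 (-m) \<le> f x" for x using m[of x] by linarith
    show ?thesis
      by (rule core[where M="max 0 (-m)", OF fum lbs _ Hs \<nu>]) (use pa in auto)
  next
    case False
    then obtain m where m: "\<And>x. f x \<le> m" using f_sb unfolding semibounded_def by blast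
    have lbs: "- max 0 m \<le> - f x" for x using m[of x] by linarith
    have fum': "(\<lambda>x. - f x) \<in> borel_measurable (completion \<mu>)" if "\<mu> \<in> prob_measures" for \<mu>
      using fum[OF that] by measurable
    define F' where "F' = (\<lambda>\<nu>. ereal_expect (completion \<nu>) (\<lambda>x. ereal (- f x)))"
    have c: "quasi_integrable (completion p) F' \<and> F' \<nu> = ereal_expect (completion p) F'"
      unfolding F'_def
      by (rule core[where M="max 0 m", OF fum' lbs _ Hs \<nu>]) (use pa in auto)
    have pt: "ereal_expect (completion \<mu>) (\<lambda>x. ereal (f x)) = - F' \<mu>" if "\<mu> \<in> prob_measures" for \<mu>
    proof -
      interpret prob_space "completion \<mu>"
        using that by (auto simp: prob_measures_def intro: prob_space.prob_space_completion)
      have "(\<integral>\<^sup>+x. e2ennreal (- ereal (- f x)) \<partial>completion \<mu>) \<le> (\<integral>\<^sup>+x. ennreal (max 0 m) \<partial>completion \<mu>)"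
        using m by (intro nn_integral_mono) (auto intro!: ennreal_leI simp: le_max_iff_disj)
      also have "\<dots> < \<infinity>" using emeasure_space_1 by simp
      finally have "(\<integral>\<^sup>+x. e2ennreal (- ereal (- f x)) \<partial>completion \<mu>) < \<infinity>" .
      then have "ereal_expect (completion \<mu>) (\<lambda>x. - ereal (- f x)) = - F' \<mu>"
        unfolding F'_def by (intro expect_neg) auto
      then show ?thesis by simp
    qed
    have q: "quasi_integrable (completion p) (\<lambda>\<nu>. - F' \<nu>)" using c by (intro quasi_neg) auto
    have e: "ereal_expect (completion p) (\<lambda>\<nu>. - F' \<nu>) = - F' \<nu>"
      using c by (subst expect_neg) (auto simp: quasi_integrable_def)
    show ?thesis
    proof
      show "quasi_integrable (completion p) (\<lambda>\<nu>. ereal_expect (completion \<nu>) (\<lambda>x. ereal (f x)))"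
        using q by (subst quasi_cong[where G'="\<lambda>\<nu>. - F' \<nu>"]) (auto intro: pt elem)
      have "ereal_expect (completion p) (\<lambda>\<nu>. ereal_expect (completion \<nu>) (\<lambda>x. ereal (f x))) = - F' \<nu>"
        using e by (subst expect_cong[where G'="\<lambda>\<nu>. - F' \<nu>"]) (auto intro: pt elem)
      then show "ereal_expect (completion \<nu>) (\<lambda>x. ereal (f x)) =
        ereal_expect (completion p) (\<lambda>\<nu>. ereal_expect (completion \<nu>) (\<lambda>x. ereal (f x)))"
        using pt[OF \<nu>] by simp
    qed
  qed
qed

end
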